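(* For any global correlation value $r \in (0,1)$ and any recovery targets $\rho_1,\rho_2 \in [0,1]$ with $\rho_1<\rho_2$, there exist data-generating processes $P_1$ and $P_2$ for (prompt, candidate scores, oracle utilities) such that $\mathrm{Corr}_{P_1}(S,O)=\mathrm{Corr}_{P_2}(S,O)=r$, while $\mathrm{Recovery}(P_1)=\rho_1$ and $\mathrm{Recovery}(P_2)=\rho_2$.
   Context: A data-generating process draws prompts $x$ and, for each prompt, $n\ge 2$ candidates $i\in\{1,\dots,n\}$, each with a judge score $S_{x,i}\in\mathbb{R}$ and an oracle utility $O_{x,i}\in\mathbb{R}$. $\mathrm{Corr}(S,O)$ denotes the global (Pearson) correlation over all (prompt, candidate) pairs. Write $S_{x,i}=\mu^S_x+\varepsilon^S_{x,i}$ and $O_{x,i}=\mu^O_x+\varepsilon^O_{x,i}$, where $\mu^S_x,\mu^O_x$ are prompt-level means and $\varepsilon^S_{x,i},\varepsilon^O_{x,i}$ are within-prompt deviations. Selection strategies for a prompt: judge-greedy picks $\arg\max_i S_{x,i}$ (uniform random tie-breaking among tied maxima), random picks a uniformly random candidate, oracle picks $\arg\max_i O_{x,i}$. Recovery is $\mathrm{Recovery}=\dfrac{\mathbb{E}[O_{\text{judge}}]-\mathbb{E}[O_{\text{random}}]}{\mathbb{E}[O_{\text{oracle}}]-\mathbb{E}[O_{\text{random}}]}$, where $O_{\text{judge}},O_{\text{random}},O_{\text{oracle}}$ are the oracle utilities of the candidates selected by the respective strategies (assuming the denominator is positive). *)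

theory Defs
  imports "HOL-Probability.Probability_Mass_Function"
begin

text \<open>A data-generating process with n candidates per prompt: a discrete distribution
  over prompts, each prompt represented by its candidate judge scores S and oracle
  utilities O (only indices i < n are relevant; candidates are 0..n-1).\<close>

type_synonym dgp = "((nat \<Rightarrow> real) \<times> (nat \<Rightarrow> real)) pmf"

definition valid_dgp :: "nat \<Rightarrow> dgp \<Rightarrow> bool" where
  "valid_dgp n P \<longleftrightarrow> n \<ge> 2 \<and> finite (set_pmf P)"

definition cand_pairs :: "nat \<Rightarrow> dgp \<Rightarrow> (real \<times> real) pmf" where
  "cand_pairs n P = bind_pmf P (\<lambda>(S, U). map_pmf (\<lambda>i. (S i, U i)) (pmf_of_set {..<n}))"

definition pearson :: "(real \<times> real) pmf \<Rightarrow> real" where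
  "pearson Q = (let E = measure_pmf.expectation Q;
                    mS = E fst; mO = E snd;
                    cov = E (\<lambda>(s, u). (s - mS) * (u - mO));
                    vS = E (\<lambda>(s, u). (s - mS)\<^sup>2);
                    vO = E (\<lambda>(s, u). (u - mO)\<^sup>2)
                in cov / sqrt (vS * vO))"

definition corr_SO :: "nat \<Rightarrow> dgp \<Rightarrow> real" where
  "corr_SO n P = pearson (cand_pairs n P)"

text \<open>Judge-greedy: argmax of S with uniform random tie-breaking; conditional expected
  oracle utility given the prompt.\<close>
definition judge_argmax :: "nat \<Rightarrow> (nat \<Rightarrow> real) \<Rightarrow> nat set" where
  "judge_argmax n S = {i \<in> {..<n}. \<forall>j<n. S j \<le> S i}"

definition judge_value :: "nat \<Rightarrow> (nat \<Rightarrow> real) \<times> (nat \<Rightarrow> real) \<Rightarrow> real" where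
  "judge_value n x = (case x of (S, U) \<Rightarrow>
     (\<Sum>i\<in>judge_argmax n S. U i) / real (card (judge_argmax n S)))"

definition random_value :: "nat \<Rightarrow> (nat \<Rightarrow> real) \<times> (nat \<Rightarrow> real) \<Rightarrow> real" where
  "random_value n x = (case x of (S, U) \<Rightarrow> (\<Sum>i<n. U i) / real n)"

definition oracle_value :: "nat \<Rightarrow> (nat \<Rightarrow> real) \<times> (nat \<Rightarrow> real) \<Rightarrow> real" where
  "oracle_value n x = (case x of (S, U) \<Rightarrow> Max (U ` {..<n}))"

definition E_judge :: "nat \<Rightarrow> dgp \<Rightarrow> real" where
  "E_judge n P = measure_pmf.expectation P (judge_value n)"

definition E_random :: "nat \<Rightarrow> dgp \<Rightarrow> real" where
  "E_random n P = measure_pmf.expectation P (random_value n)"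

definition E_oracle :: "nat \<Rightarrow> dgp \<Rightarrow> real" where
  "E_oracle n P = measure_pmf.expectation P (oracle_value n)"

definition recovery :: "nat \<Rightarrow> dgp \<Rightarrow> real" where
  "recovery n P = (E_judge n P - E_random n P) / (E_oracle n P - E_random n P)"

end

theory Submission
  imports Defs
begin

lemma E_cand:
  assumes "m > 0" "n > 0"
  shows "measure_pmf.expectation (cand_pairs n (map_pmf g (pmf_of_set {..<m}))) f
     = (\<Sum>j<m. \<Sum>i<n. f (fst (g j) i, snd (g j) i)) / (real m * real n)"
proof -
  have e1: "cand_pairs n (map_pmf g (pmf_of_set {..<m})) =
     pmf_of_set {..<m} \<bind> (\<lambda>j. map_pmf (\<lambda>i. (fst (g j) i, snd (g j) i)) (pmf_of_set {..<n}))"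
    unfolding cand_pairs_def by (simp add: bind_map_pmf case_prod_beta o_def)
  have e2: "measure_pmf.expectation (map_pmf (\<lambda>i. (fst (g j) i, snd (g j) i)) (pmf_of_set {..<n})) f
     = (\<Sum>i<n. f (fst (g j) i, snd (g j) i)) / real n" for j
    using assms by (simp, subst integral_pmf_of_set) auto
  have e3: "finite (set_pmf (map_pmf (\<lambda>i. (fst (g j) i, snd (g j) i)) (pmf_of_set {..<n})))" for j
    using assms by (simp, subst set_pmf_of_set) auto
  have "measure_pmf.expectation (pmf_of_set {..<m} \<bind> (\<lambda>j. map_pmf (\<lambda>i. (fst (g j) i, snd (g j) i)) (pmf_of_set {..<n}))) f
     = (\<Sum>j<m. measure_pmf.expectation (map_pmf (\<lambda>i. (fst (g j) i, snd (g j) i)) (pmf_of_set {..<n})) f /\<^sub>R real (card {..<m}))"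
    by (rule pmf_expectation_bind_pmf_of_set) (use assms e3 in auto)
  then show ?thesis unfolding e1 e2
    by (simp add: sum_divide_distrib[symmetric] divide_simps)
qed

lemma E_P:
  assumes "m > 0"
  shows "measure_pmf.expectation (map_pmf g (pmf_of_set {..<m})) (f::_\<Rightarrow>real)
     = (\<Sum>j<m. f (g j)) / real m"
  using assms by (simp, subst integral_pmf_of_set) auto

definition T0 :: "nat \<Rightarrow> real" where "T0 i = (if i = 1 then 1 else 0)"
definition U0 :: "real \<Rightarrow> nat \<Rightarrow> real" where "U0 a i = (if i = 0 then 1 else if i = 1 then a else 0)"
definition ep :: "nat \<Rightarrow> real" where "ep j = (if j < 2 then 1 else -1)"
definition de :: "nat \<Rightarrow> real" where "de j = (if j = 0 \<or> j = 2 then 1 else -1)"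
definition gg :: "real \<Rightarrow> real \<Rightarrow> real \<Rightarrow> nat \<Rightarrow> (nat \<Rightarrow> real) \<times> (nat \<Rightarrow> real)" where
  "gg a M c j = ((\<lambda>i. T0 i + M * ep j + c * de j), (\<lambda>i. U0 a i + M * ep j))"
definition PP :: "real \<Rightarrow> real \<Rightarrow> real \<Rightarrow> dgp" where
  "PP a M c = map_pmf (gg a M c) (pmf_of_set {..<4})"

lemma three: "{..<3::nat} = {0,1,2}" by auto
lemma four: "{..<4::nat} = {0,1,2,3}" by auto

lemma argmax: "judge_argmax 3 (fst (gg a M c j)) = {1}"
  unfolding judge_argmax_def gg_def three by (auto simp: T0_def)

lemma jv: "judge_value 3 (gg a M c j) = a + M * ep j"
  unfolding judge_value_def by (simp add: case_prod_beta argmax) (simp add: gg_def U0_def)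

lemma rv: "random_value 3 (gg a M c j) = (1 + a) / 3 + M * ep j"
  unfolding random_value_def by (simp add: gg_def three U0_def field_simps)

lemma ov: "a \<le> 1 \<Longrightarrow> a \<ge> 0 \<Longrightarrow> oracle_value 3 (gg a M c j) = 1 + M * ep j"
  unfolding oracle_value_def by (simp add: gg_def three U0_def max_def)

lemma EJ: "E_judge 3 (PP a M c) = a"
  unfolding E_judge_def PP_def by (subst E_P, simp, simp add: jv four ep_def)
lemma ER: "E_random 3 (PP a M c) = (1 + a) / 3"
  unfolding E_random_def PP_def by (subst E_P, simp, simp add: rv four ep_def)
lemma EO: "a \<le> 1 \<Longrightarrow> a \<ge> 0 \<Longrightarrow> E_oracle 3 (PP a M c) = 1"
  unfolding E_oracle_def PP_def by (subst E_P, simp, simp add: ov four ep_def)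

lemma EC: "measure_pmf.expectation (cand_pairs 3 (PP a M c)) (f::_\<Rightarrow>real) =
   (\<Sum>j\<in>{0,1,2,3}. \<Sum>i\<in>{0,1,2}. f (fst (gg a M c j) i, snd (gg a M c j) i)) / 12"
  unfolding PP_def by (simp add: E_cand, simp add: three four)


lemma m1: "measure_pmf.expectation (cand_pairs 3 (PP a M c)) fst = 1/3"
  unfolding EC by (simp add: gg_def T0_def U0_def ep_def de_def)
lemma m2: "measure_pmf.expectation (cand_pairs 3 (PP a M c)) snd = (1+a)/3"
  unfolding EC by (simp add: gg_def T0_def U0_def ep_def de_def)
lemma m3: "measure_pmf.expectation (cand_pairs 3 (PP a M c)) (\<lambda>(s, u). (s - 1/3) * (u - (1+a)/3)) = (2*a-1)/9 + M^2"
  unfolding EC by (simp add: gg_def T0_def U0_def ep_def de_def) (simp add: field_simps power2_eq_square)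
lemma m4: "measure_pmf.expectation (cand_pairs 3 (PP a M c)) (\<lambda>(s, u). (s - 1/3)^2) = 2/9 + M^2 + c^2"
  unfolding EC by (simp add: gg_def T0_def U0_def ep_def de_def) (simp add: field_simps power2_eq_square)
lemma m5: "measure_pmf.expectation (cand_pairs 3 (PP a M c)) (\<lambda>(s, u). (u - (1+a)/3)^2) = (2*a^2-2*a+2)/9 + M^2"
  unfolding EC by (simp add: gg_def T0_def U0_def ep_def de_def) (simp add: field_simps power2_eq_square)

lemma corr: "corr_SO 3 (PP a M c) =
   ((2*a-1)/9 + M^2) / sqrt ((2/9 + M^2 + c^2) * ((2*a^2-2*a+2)/9 + M^2))"
  unfolding corr_SO_def pearson_def Let_def m1 m2 m3 m4 m5 ..

lemma one_dgp:
  fixes r \<rho> :: real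
  assumes r: "0 < r" "r < 1" and \<rho>: "0 \<le> \<rho>" "\<rho> \<le> 1"
  shows "\<exists>n P. valid_dgp n P \<and> corr_SO n P = r \<and> E_oracle n P - E_random n P > 0 \<and> recovery n P = \<rho>"
proof -
  define a where "a = (1 + 2*\<rho>) / (2 + \<rho>)"
  define M where "M = 1 / (1 - r)"
  define K where "K = (2*a-1)/9 + M^2"
  define V where "V = (2*a^2-2*a+2)/9 + M^2"
  define c where "c = sqrt (K^2 / (r^2 * V) - 2/9 - M^2)"
  have a1: "a \<le> 1" "1/2 \<le> a" using \<rho> unfolding a_def by (auto simp: field_simps)
  have M1: "M \<ge> 1" "M * (1 - r) = 1" using r unfolding M_def by (auto simp: field_simps)
  have K0: "K \<ge> M^2" using a1 unfolding K_def by simp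
  have V0: "V > 0" "V \<le> M^2 + 1"
  proof -
    have sq: "a^2 \<le> a" using a1 by (simp add: power2_eq_square mult_left_le)
    have "2*a^2-2*a+2 = 2*(a-1/2)^2 + 3/2" by (simp add: power2_eq_square algebra_simps)
    moreover have "(a-1/2)^2 \<ge> 0" by simp
    ultimately have "2*a^2-2*a+2 \<ge> 0" by linarith
    moreover have "2*a^2-2*a+2 \<le> 9" using sq a1 by linarith
    ultimately have "2*a^2-2*a+2 \<ge> 0" "2*a^2-2*a+2 \<le> 9" by auto
    then show "V > 0" "V \<le> M^2 + 1" unfolding V_def using M1 by (auto intro: add_nonneg_pos)
  qed
  have rM: "r * (M^2 + 1) \<le> M^2"
  proof -
    have "r * M \<le> M - 1" using M1 by (simp add: algebra_simps)
    then have "r * M * M \<le> (M - 1) * M" using M1 by (intro mult_right_mono) auto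
    moreover have "r \<le> M - 1"
    proof -
      have "r * 1 \<le> r * M" using M1 r by (intro mult_left_mono) auto
      then show ?thesis using M1 by (simp add: algebra_simps)
    qed
    ultimately show ?thesis by (simp add: power2_eq_square algebra_simps)
  qed
  have key: "r^2 * V * (2/9 + M^2) \<le> K^2"
  proof -
    have "r^2 * V * (2/9 + M^2) \<le> r^2 * ((M^2+1) * (M^2+1))"
    proof -
      have "V * (2/9 + M^2) \<le> (M^2+1) * (M^2+1)" using V0 by (intro mult_mono) auto
      then have "r^2 * (V * (2/9 + M^2)) \<le> r^2 * ((M^2+1) * (M^2+1))" by (intro mult_left_mono) auto
      then show ?thesis by (simp add: mult.assoc)
    qed
    also have "\<dots> = (r * (M^2+1))^2" by (simp add: power2_eq_square)
    also have "\<dots> \<le> (M^2)^2" using rM r by (intro power_mono) auto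
    also have "\<dots> \<le> K^2" using K0 by (intro power_mono) auto
    finally show ?thesis .
  qed
  have c2: "c^2 = K^2 / (r^2 * V) - 2/9 - M^2"
    unfolding c_def using key r V0 by (subst real_sqrt_pow2) (auto simp: field_simps)
  have Kp: "K > 0" using K0 M1 by (smt (verit) one_le_power)
  have "corr_SO 3 (PP a M c) = K / sqrt ((2/9 + M^2 + c^2) * V)"
    unfolding corr K_def V_def ..
  also have "(2/9 + M^2 + c^2) * V = (K / r)^2" using c2 V0 r by (simp add: field_simps power2_eq_square)
  also have "K / sqrt ((K/r)^2) = r" using Kp r by simp
  finally have C: "corr_SO 3 (PP a M c) = r" .
  have fin: "finite (set_pmf (PP a M c))" unfolding PP_def by (simp, subst set_pmf_of_set) (auto simp: four)
  have den: "E_oracle 3 (PP a M c) - E_random 3 (PP a M c) = (2 - a)/3"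
    using a1 by (simp add: EO ER field_simps)
  have "recovery 3 (PP a M c) = (a - (1+a)/3) / ((2-a)/3)"
    unfolding recovery_def EJ ER using a1 by (simp add: EO field_simps)
  also have "\<dots> = (2*a - 1) / (2 - a)" using a1 by (simp add: field_simps)
  also have "2*a - 1 = 3*\<rho> / (2 + \<rho>)" unfolding a_def using \<rho> by (simp add: field_simps)
  also have "2 - a = 3 / (2 + \<rho>)" unfolding a_def using \<rho> by (simp add: field_simps)
  also have "3*\<rho> / (2 + \<rho>) / (3 / (2 + \<rho>)) = \<rho>" using \<rho> by (simp add: field_simps)
  finally show ?thesis using C fin den a1
    by (intro exI[of _ 3] exI[of _ "PP a M c"]) (simp add: valid_dgp_def)
qed

theorem mainTheorem1:
  fixes r \<rho>1 \<rho>2 :: real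
  assumes "0 < r" and "r < 1"
    and "0 \<le> \<rho>1" and "\<rho>1 < \<rho>2" and "\<rho>2 \<le> 1"
  shows "\<exists>n1 P1 n2 P2.
           valid_dgp n1 P1 \<and> valid_dgp n2 P2 \<and>
           corr_SO n1 P1 = r \<and> corr_SO n2 P2 = r \<and>
           E_oracle n1 P1 - E_random n1 P1 > 0 \<and>
           E_oracle n2 P2 - E_random n2 P2 > 0 \<and>
           recovery n1 P1 = \<rho>1 \<and> recovery n2 P2 = \<rho>2"
proof -
  obtain n1 P1 where 1: "valid_dgp n1 P1 \<and> corr_SO n1 P1 = r \<and> E_oracle n1 P1 - E_random n1 P1 > 0 \<and> recovery n1 P1 = \<rho>1"
    using one_dgp[of r \<rho>1] assms by auto
  obtain n2 P2 where 2: "valid_dgp n2 P2 \<and> corr_SO n2 P2 = r \<and> E_oracle n2 P2 - E_random n2 P2 > 0 \<and> recovery n2 P2 = \<rho>2"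
    using one_dgp[of r \<rho>2] assms by auto
  show ?thesis using 1 2 by blast
qed
end
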